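(* Let $f:2^V\to\mathbb{Z}_{\ge0}$ be a connectivity function, $W\subseteq V$, and $(C_1,C_2,C_3)$ a minimum $W$-improvement of arity 3. Then for every $i,j\in\{1,2,3\}$ and every set $P$ with $C_i\subseteq P\subseteq C_i\cup(W\cap C_j)$, it holds that $f(P)\ge f(C_i)$.
   Context: A connectivity function $f:2^V\to\mathbb{Z}_{\ge0}$ ($V$ finite) satisfies $f(\emptyset)=0$, $f(X)=f(V\setminus X)$, and $f(X\cup Y)+f(X\cap Y)\le f(X)+f(Y)$. For $W\subseteq V$, a $W$-improvement is a tripartition $(C_1,C_2,C_3)$ of $V$ (pairwise disjoint, possibly empty, union $V$) with $f(C_i)<f(W)/2$, $f(C_i\cap W)<f(W)$, $f(C_i\cap(V\setminus W))<f(W)$ for each $i$. Its width is $\max_i f(C_i)$, its sum-width is $\sum_i f(C_i)$, and its arity is the number of nonempty $C_i$. A $W$-improvement is minimum if it has minimum width among all $W$-improvements, subject to that minimum arity, and subject to those minimum sum-width. *)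

theory Defs
  imports Main
begin

text \<open>Connectivity function on a finite ground set V, with values in the naturals.
  Set functions are only meaningful on subsets of V.\<close>
definition connectivity_function :: "'a set \<Rightarrow> ('a set \<Rightarrow> nat) \<Rightarrow> bool" where
  "connectivity_function V f \<longleftrightarrow>
     finite V \<and> f {} = 0 \<and>
     (\<forall>X\<subseteq>V. f X = f (V - X)) \<and>
     (\<forall>X\<subseteq>V. \<forall>Y\<subseteq>V. f (X \<union> Y) + f (X \<inter> Y) \<le> f X + f Y)"

definition tripartition :: "'a set \<Rightarrow> (nat \<Rightarrow> 'a set) \<Rightarrow> bool" where
  "tripartition V C \<longleftrightarrow>
     C 1 \<union> C 2 \<union> C 3 = V \<and>
     C 1 \<inter> C 2 = {} \<and> C 1 \<inter> C 3 = {} \<and> C 2 \<inter> C 3 = {}"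

text \<open>f(C_i) < f(W)/2 is written as 2 * f(C_i) < f(W) (exact over the naturals).\<close>
definition W_improvement ::
  "'a set \<Rightarrow> ('a set \<Rightarrow> nat) \<Rightarrow> 'a set \<Rightarrow> (nat \<Rightarrow> 'a set) \<Rightarrow> bool" where
  "W_improvement V f W C \<longleftrightarrow>
     tripartition V C \<and>
     (\<forall>i\<in>{1,2,3::nat}.
        2 * f (C i) < f W \<and>
        f (C i \<inter> W) < f W \<and>
        f (C i \<inter> (V - W)) < f W)"

definition width :: "('a set \<Rightarrow> nat) \<Rightarrow> (nat \<Rightarrow> 'a set) \<Rightarrow> nat" where
  "width f C = Max {f (C 1), f (C 2), f (C 3)}"

definition sum_width :: "('a set \<Rightarrow> nat) \<Rightarrow> (nat \<Rightarrow> 'a set) \<Rightarrow> nat" where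
  "sum_width f C = f (C 1) + f (C 2) + f (C 3)"

definition arity :: "(nat \<Rightarrow> 'a set) \<Rightarrow> nat" where
  "arity C = card {i\<in>{1,2,3::nat}. C i \<noteq> {}}"

definition min_W_improvement ::
  "'a set \<Rightarrow> ('a set \<Rightarrow> nat) \<Rightarrow> 'a set \<Rightarrow> (nat \<Rightarrow> 'a set) \<Rightarrow> bool" where
  "min_W_improvement V f W C \<longleftrightarrow>
     W_improvement V f W C \<and>
     (\<forall>D. W_improvement V f W D \<longrightarrow>
        width f C < width f D \<or>
        (width f C = width f D \<and> arity C < arity D) \<or>
        (width f C = width f D \<and> arity C = arity D \<and> sum_width f C \<le> sum_width f D))"

end

theory Submission
  imports Defs
begin

definition mk3 :: "'a set \<Rightarrow> 'a set \<Rightarrow> 'a set \<Rightarrow> nat \<Rightarrow> 'a set" where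
  "mk3 X Y Z = (\<lambda>l. if l = 1 then X else if l = 2 then Y else Z)"

lemma mk3_simps[simp]: "mk3 X Y Z 1 = X" "mk3 X Y Z (Suc 0) = X" "mk3 X Y Z 2 = Y" "mk3 X Y Z 3 = Z"
  by (simp_all add: mk3_def)

lemma arity_le3: "arity D \<le> 3"
proof -
  have "card {i\<in>{1,2,3::nat}. D i \<noteq> {}} \<le> card {1,2,3::nat}"
    by (rule card_mono) auto
  then show ?thesis by (simp add: arity_def)
qed

lemma arity_le2: "arity (mk3 A B {}) \<le> 2"
proof -
  have "{i\<in>{1,2,3::nat}. mk3 A B {} i \<noteq> {}} \<subseteq> {1,2}" by auto
  then have "card {i\<in>{1,2,3::nat}. mk3 A B {} i \<noteq> {}} \<le> card {1,2::nat}"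
    by (rule card_mono[rotated]) auto
  then show ?thesis by (simp add: arity_def)
qed

lemma min_beats:
  assumes "min_W_improvement V f W C" "W_improvement V f W D"
    "width f D \<le> width f C" "arity D \<le> arity C"
    "sum_width f D < sum_width f C \<or> arity D < arity C"
  shows False
  using assms unfolding min_W_improvement_def by force

lemma cf_compl: "connectivity_function V f \<Longrightarrow> X \<subseteq> V \<Longrightarrow> f X = f (V - X)"
  unfolding connectivity_function_def by blast

lemma cf_sub: "connectivity_function V f \<Longrightarrow> X \<subseteq> V \<Longrightarrow> Y \<subseteq> V \<Longrightarrow>
   f (X \<union> Y) + f (X \<inter> Y) \<le> f X + f Y"
  unfolding connectivity_function_def by blast

lemma cf_empty: "connectivity_function V f \<Longrightarrow> f {} = 0"
  unfolding connectivity_function_def by blast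

lemma cf_posi: assumes "connectivity_function V f" "X \<subseteq> V" "Y \<subseteq> V"
  shows "f (X - Y) + f (Y - X) \<le> f X + f Y"
proof -
  have "f (X \<union> (V - Y)) + f (X \<inter> (V - Y)) \<le> f X + f (V - Y)"
    using cf_sub[OF assms(1,2)] by blast
  moreover have "X \<union> (V - Y) = V - (Y - X)" using assms by blast
  moreover have "X \<inter> (V - Y) = X - Y" using assms by blast
  moreover have "f (Y - X) = f (V - (Y - X))" using cf_compl[OF assms(1), of "Y - X"] assms by blast
  moreover have "f (V - Y) = f Y" using cf_compl[OF assms(1,3)] by simp
  ultimately show ?thesis by simp
qed

lemma main:
  assumes cf: "connectivity_function V f" and WV: "W \<subseteq> V"
    and mn: "min_W_improvement V f W (mk3 X Y Z)"
    and ar: "arity (mk3 X Y Z) = 3"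
    and XP: "X \<subseteq> P" and PX: "P \<subseteq> X \<union> (W \<inter> Y)"
  shows "f X \<le> f P"
proof (rule ccontr)
  assume "\<not> f X \<le> f P"
  then have lt: "f P < f X" by simp
  have imp: "W_improvement V f W (mk3 X Y Z)" using mn min_W_improvement_def by blast
  then have tri: "X \<union> Y \<union> Z = V" "X \<inter> Y = {}" "X \<inter> Z = {}" "Y \<inter> Z = {}"
    by (auto simp: W_improvement_def tripartition_def)
  have cX: "2 * f X < f W" "f (X \<inter> W) < f W" "f (X \<inter> (V - W)) < f W"
    using imp by (auto simp: W_improvement_def)
  have cY: "2 * f Y < f W" "f (Y \<inter> W) < f W" "f (Y \<inter> (V - W)) < f W"
    using imp by (auto simp: W_improvement_def)
  have cZ: "2 * f Z < f W" "f (Z \<inter> W) < f W" "f (Z \<inter> (V - W)) < f W"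
    using imp by (auto simp: W_improvement_def)
  have f0: "f {} = 0" using cf_empty[OF cf] .
  have XV: "X \<subseteq> V" and YV: "Y \<subseteq> V" and ZV: "Z \<subseteq> V" using tri by auto
  have PV: "P \<subseteq> V" using PX XV YV by blast
  define S where "S = Y - P"
  have SV: "S \<subseteq> V" using YV S_def by blast
  have "f (Y - P) + f (P - Y) \<le> f Y + f P" using cf_posi[OF cf YV PV] .
  moreover have "P - Y = X" using XP PX tri by blast
  ultimately have fS: "f S < f Y" using lt S_def by simp
  have wd: "width f (mk3 X Y Z) = Max {f X, f Y, f Z}" by (simp add: width_def)
  show False
  proof (cases "f W \<le> f (P \<inter> W)")
    case True
    have "f (P \<union> W) + f (P \<inter> W) \<le> f P + f W" using cf_sub[OF cf PV WV] .
    then have "f (P \<union> W) \<le> f P" using True by simp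
    moreover have "V - (P \<union> W) = (Y \<union> Z) - W" using tri XP PX by blast
    moreover have "f (P \<union> W) = f (V - (P \<union> W))" using cf_compl[OF cf, of "P \<union> W"] PV WV by simp
    ultimately have a: "f ((Y \<union> Z) - W) \<le> f P" by simp
    have "f (X \<union> ((Y \<union> Z) - W)) + f (X \<inter> ((Y \<union> Z) - W)) \<le> f X + f ((Y \<union> Z) - W)"
      using cf_sub[OF cf XV, of "(Y \<union> Z) - W"] YV ZV by fast
    moreover have "X \<inter> ((Y \<union> Z) - W) = {}" using tri by blast
    moreover have "X \<union> ((Y \<union> Z) - W) = V - ((Y \<union> Z) \<inter> W)" using tri by blast
    moreover have "f (V - ((Y \<union> Z) \<inter> W)) = f ((Y \<union> Z) \<inter> W)"
      using cf_compl[OF cf, of "(Y \<union> Z) \<inter> W"] YV ZV by (metis Int_lower1 Un_subset_iff order_trans)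
    ultimately have b: "f ((Y \<union> Z) \<inter> W) < f W" using a lt cX f0 by simp
    have "V - X = Y \<union> Z" using tri by blast
    then have fYZ: "f (Y \<union> Z) = f X" using cf_compl[OF cf XV] by simp
    have c: "(Y \<union> Z) \<inter> (V - W) = (Y \<union> Z) - W" using tri by blast
    have "W_improvement V f W (mk3 (Y \<union> Z) X {})"
      unfolding W_improvement_def tripartition_def
      using tri b c a lt cX f0 fYZ by auto
    moreover have "width f (mk3 (Y \<union> Z) X {}) \<le> width f (mk3 X Y Z)"
      unfolding width_def using fYZ f0 by simp
    ultimately show False
      using min_beats[OF mn, of "mk3 (Y \<union> Z) X {}"] arity_le2[of "Y \<union> Z" X] ar by linarith
  next
    case F1: False
    show False
    proof (cases "f W \<le> f (S \<inter> W)")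
      case True
      have "f (S \<union> W) + f (S \<inter> W) \<le> f S + f W" using cf_sub[OF cf SV WV] .
      then have "f (S \<union> W) \<le> f S" using True by simp
      moreover have "V - (S \<union> W) = (X \<union> Z) - W" using tri XP PX S_def by blast
      moreover have "f (S \<union> W) = f (V - (S \<union> W))" using cf_compl[OF cf, of "S \<union> W"] SV WV by simp
      ultimately have a: "f ((X \<union> Z) - W) \<le> f S" by simp
      have "f (Y \<union> ((X \<union> Z) - W)) + f (Y \<inter> ((X \<union> Z) - W)) \<le> f Y + f ((X \<union> Z) - W)"
        using cf_sub[OF cf YV, of "(X \<union> Z) - W"] XV ZV by fast
      moreover have "Y \<inter> ((X \<union> Z) - W) = {}" using tri by blast
      moreover have "Y \<union> ((X \<union> Z) - W) = V - ((X \<union> Z) \<inter> W)" using tri by blast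
      moreover have "f (V - ((X \<union> Z) \<inter> W)) = f ((X \<union> Z) \<inter> W)"
        using cf_compl[OF cf, of "(X \<union> Z) \<inter> W"] XV ZV by (metis Int_lower1 Un_subset_iff order_trans)
      ultimately have b: "f ((X \<union> Z) \<inter> W) < f W" using a fS cY f0 by simp
      have "V - Y = X \<union> Z" using tri by blast
      then have fXZ: "f (X \<union> Z) = f Y" using cf_compl[OF cf YV] by simp
      have c: "(X \<union> Z) \<inter> (V - W) = (X \<union> Z) - W" using tri by blast
      have "W_improvement V f W (mk3 (X \<union> Z) Y {})"
        unfolding W_improvement_def tripartition_def
        using tri b c a fS cY f0 fXZ by auto
      moreover have "width f (mk3 (X \<union> Z) Y {}) \<le> width f (mk3 X Y Z)"
        unfolding width_def using fXZ f0 by simp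
      ultimately show False
      using min_beats[OF mn, of "mk3 (X \<union> Z) Y {}"] arity_le2[of "X \<union> Z" Y] ar by linarith
    next
      case F2: False
      have e1: "P \<inter> (V - W) = X \<inter> (V - W)" using XP PX by auto
      have e2: "S \<inter> (V - W) = Y \<inter> (V - W)" using XP PX tri(2) unfolding S_def by auto
      have t1: "P \<union> S \<union> Z = V" using tri XP PX unfolding S_def by auto
      have t2: "P \<inter> S = {}" "P \<inter> Z = {}" "S \<inter> Z = {}" using tri XP PX unfolding S_def by auto
      have "W_improvement V f W (mk3 P S Z)"
        unfolding W_improvement_def tripartition_def
        using t1 t2 F1 F2 e1 e2 lt fS cX cY cZ by simp
      moreover have "width f (mk3 P S Z) \<le> width f (mk3 X Y Z)"
        unfolding width_def using lt fS by (auto simp: max_def)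
      moreover have "sum_width f (mk3 P S Z) < sum_width f (mk3 X Y Z)"
        unfolding sum_width_def using lt fS by simp
      ultimately show False using min_beats[OF mn, of "mk3 P S Z"] arity_le3[of "mk3 P S Z"] ar by linarith
    qed
  qed
qed


definition gd :: "'a set \<Rightarrow> ('a set \<Rightarrow> nat) \<Rightarrow> 'a set \<Rightarrow> 'a set \<Rightarrow> bool" where
  "gd V f W X \<longleftrightarrow> 2 * f X < f W \<and> f (X \<inter> W) < f W \<and> f (X \<inter> (V - W)) < f W"

lemma W_imp_alt: "W_improvement V f W C \<longleftrightarrow>
  (C 1 \<union> C 2 \<union> C 3 = V \<and> C 1 \<inter> C 2 = {} \<and> C 1 \<inter> C 3 = {} \<and> C 2 \<inter> C 3 = {}) \<and>
  gd V f W (C 1) \<and> gd V f W (C 2) \<and> gd V f W (C 3)"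
  unfolding W_improvement_def tripartition_def gd_def by auto

lemma arity_alt: "arity C = (if C 1 = {} then 0 else 1) + (if C 2 = {} then 0 else 1) + (if C 3 = {} then 0 else (1::nat))"
proof -
  have "{i\<in>{1,2,3::nat}. C i \<noteq> {}} = (if C 1 = {} then {} else {1}) \<union> (if C 2 = {} then {} else {2}) \<union> (if C 3 = {} then {} else {3})"
    by auto
  then show ?thesis unfolding arity_def by (simp add: card_Un_disjoint)
qed

lemma perm6: assumes "a \<in> {1,2,3::nat}" "b \<in> {1,2,3::nat}" "c \<in> {1,2,3::nat}" "a \<noteq> b" "a \<noteq> c" "b \<noteq> c"
  shows "(a,b,c) \<in> {(1,2,3),(1,3,2),(2,1,3),(2,3,1),(3,1,2),(3,2,1)}"
  using assms by auto

lemma perm_transfer: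
  assumes "a \<in> {1,2,3::nat}" "b \<in> {1,2,3::nat}" "c \<in> {1,2,3::nat}" "a \<noteq> b" "a \<noteq> c" "b \<noteq> c"
  shows "W_improvement V f W (mk3 (C a) (C b) (C c)) = W_improvement V f W C
    \<and> width f (mk3 (C a) (C b) (C c)) = width f C
    \<and> arity (mk3 (C a) (C b) (C c)) = arity C
    \<and> sum_width f (mk3 (C a) (C b) (C c)) = sum_width f C"
  using perm6[OF assms] unfolding W_imp_alt width_def arity_alt sum_width_def
  by (elim insertE emptyE; simp only: prod.inject; elim conjE; simp only: mk3_simps;
      simp add: Un_ac Int_ac conj_ac insert_commute)

lemma min_transfer:
  assumes "a \<in> {1,2,3::nat}" "b \<in> {1,2,3::nat}" "c \<in> {1,2,3::nat}" "a \<noteq> b" "a \<noteq> c" "b \<noteq> c"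
    "min_W_improvement V f W C"
  shows "min_W_improvement V f W (mk3 (C a) (C b) (C c))"
  using assms(7) perm_transfer[OF assms(1-6), where V=V and f=f and W=W and C=C] unfolding min_W_improvement_def by simp

theorem lemma9:
  fixes V W :: "'a set" and f :: "'a set \<Rightarrow> nat" and C :: "nat \<Rightarrow> 'a set"
  assumes "connectivity_function V f"
    and "W \<subseteq> V"
    and "min_W_improvement V f W C"
    and "arity C = 3"
    and "i \<in> {1,2,3}" and "j \<in> {1,2,3}"
    and "C i \<subseteq> P" and "P \<subseteq> C i \<union> (W \<inter> C j)"
  shows "f P \<ge> f (C i)"
proof (cases "i = j")
  case True
  then have "P = C i" using assms(7,8) by blast
  then show ?thesis by simp
next
  case False
  obtain k where k: "k \<in> {1,2,3::nat}" "k \<noteq> i" "k \<noteq> j"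
    using assms(5,6) False by (metis insertCI insertE singletonD numeral_One numeral_eq_iff semiring_norm(83) semiring_norm(86) semiring_norm(89) num.distinct(1))
  have mn: "min_W_improvement V f W (mk3 (C i) (C j) (C k))"
    using min_transfer[OF assms(5,6) k(1) False k(2)[symmetric] k(3)[symmetric] assms(3)] .
  have ar: "arity (mk3 (C i) (C j) (C k)) = 3"
    using perm_transfer[OF assms(5,6) k(1) False k(2)[symmetric] k(3)[symmetric], where V=V and f=f and W=W and C=C] assms(4) by simp
  show ?thesis using main[OF assms(1,2) mn ar assms(7,8)] by simp
qed

end
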